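(* Let $\mathcal{S}=\mathcal{V}\cup\{m\}$ with $m$ a mask state, and let $\alpha_t$ be a differentiable noise schedule on $[0,T]$ with $\alpha_0=1$, $\alpha_T=0$, $\alpha_t\in(0,1)$ and $\alpha_t'<0$ for $t\in(0,T)$. Consider the masked (absorbing) forward CTMC with rates $R_t(i,j)=-\frac{\alpha_t'}{\alpha_t}(e_j^\top e_m)\mathbf{1}_{\{i\ne m\}}$ ($i\ne j$), so that $q_{t|0}(\cdot\mid x_0)=\alpha_t x_0+(1-\alpha_t)e_m$ for $x_0\in\mathcal{V}$ (identified with its one-hot vector), with $p_{\text{data}}$ supported on $\mathcal{V}$. Let $x_\theta=x_\theta(x_t,t)$ be a probability vector on $\mathcal{V}$ and set $\gamma_t:=-\frac{\alpha_t'}{1-\alpha_t}$ and model rates $R^\theta_t(i,j)=\gamma_t\,e_j^\top(x_\theta-e_m)\mathbf{1}_{\{i=m\}}$, i.e. $\lambda^\theta_t(m)=\gamma_t$, $r^\theta_t(j\mid m)=e_j^\top x_\theta$ for $j\in\mathcal{V}$, and $R^\theta_t(i,\cdot)=0$ for $i\ne m$. Then \[ \mathcal{L}_{\mathrm{cond}}(\theta)=\mathbb{E}_{t\sim\mathcal{U}(0,T),\,x_0\sim p_{\text{data}},\,x_t\sim q_{t|0}(\cdot\mid x_0)}\Bigl[\frac{\alpha_t'}{1-\alpha_t}\,x_0^\top\log x_\theta\cdot\mathbf{1}_{\{x_t=m\}}\Bigr], \] where \[ \mathcal{L}_{\mathrm{cond}}(\theta):=\mathbb{E}_{t,\,x_0,\,i\sim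 q_{t|0}(\cdot\mid x_0)}\Bigl[\sum_{j\ne i}R^\theta_t(i,j)-\sum_{j\ne i}R_t(j,i)\frac{q_{t|0}(j\mid x_0)}{q_{t|0}(i\mid x_0)}\log\frac{R^\theta_t(i,j)}{R_t(j,i)}+\sum_{j\ne i}R_t(j,i)K\Bigl(\frac{q_{t|0}(j\mid x_0)}{q_{t|0}(i\mid x_0)}\Bigr)\Bigr] \] with $K(a)=a(\log a-1)$.
   Context: $e_j$ denotes the one-hot vector of state $j$; $\log x_\theta$ is taken componentwise. Terms with zero rate multiplying are interpreted via the convention $0\log0=0$ (so states $i\ne m$ contribute zero). *)

theory Defs
  imports "HOL-Analysis.Analysis" "HOL-Probability.Probability_Mass_Function"
begin

text \<open>State space S = V \<union> {m}, rendered as the type 'v option with the mask state m = None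
  and V = range Some. One-hot vectors are implicit: e_j^T v is the j-th component.\<close>

definition fwd_rate :: "(real \<Rightarrow> real) \<Rightarrow> (real \<Rightarrow> real) \<Rightarrow> real \<Rightarrow> 'v option \<Rightarrow> 'v option \<Rightarrow> real" where
  "fwd_rate alpha alpha' t i j =
     (if i \<noteq> j then (if j = None \<and> i \<noteq> None then - alpha' t / alpha t else 0)
      else (if i \<noteq> None then alpha' t / alpha t else 0))"

definition cond_marg :: "(real \<Rightarrow> real) \<Rightarrow> real \<Rightarrow> 'v \<Rightarrow> 'v option \<Rightarrow> real" where
  "cond_marg alpha t x0 j =
     (if j = Some x0 then alpha t else 0) + (if j = None then 1 - alpha t else 0)"

definition gamma_sched :: "(real \<Rightarrow> real) \<Rightarrow> (real \<Rightarrow> real) \<Rightarrow> real \<Rightarrow> real" where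
  "gamma_sched alpha alpha' t = - alpha' t / (1 - alpha t)"

definition model_rate :: "(real \<Rightarrow> real) \<Rightarrow> (real \<Rightarrow> real) \<Rightarrow> ('v option \<Rightarrow> real \<Rightarrow> 'v \<Rightarrow> real)
    \<Rightarrow> real \<Rightarrow> 'v option \<Rightarrow> 'v option \<Rightarrow> real" where
  "model_rate alpha alpha' xth t i j =
     (if i = None then gamma_sched alpha alpha' t * (case j of Some v \<Rightarrow> xth i t v | None \<Rightarrow> -1)
      else 0)"

definition Kfun :: "real \<Rightarrow> real" where
  "Kfun a = a * (ln a - 1)"

definition L_cond :: "(real \<Rightarrow> real) \<Rightarrow> (real \<Rightarrow> real) \<Rightarrow> real \<Rightarrow> 'v pmf
    \<Rightarrow> ('v option \<Rightarrow> real \<Rightarrow> 'v \<Rightarrow> real) \<Rightarrow> real" where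
  "L_cond alpha alpha' T p xth =
     (LINT t:{0..T}|lborel.
        (\<Sum>x0\<in>UNIV. pmf p x0 *
          (\<Sum>i\<in>UNIV. cond_marg alpha t x0 i *
            ((\<Sum>j\<in>UNIV - {i}. model_rate alpha alpha' xth t i j)
             - (\<Sum>j\<in>UNIV - {i}. fwd_rate alpha alpha' t j i
                  * (cond_marg alpha t x0 j / cond_marg alpha t x0 i)
                  * ln (model_rate alpha alpha' xth t i j / fwd_rate alpha alpha' t j i))
             + (\<Sum>j\<in>UNIV - {i}. fwd_rate alpha alpha' t j i
                  * Kfun (cond_marg alpha t x0 j / cond_marg alpha t x0 i)))))) / T"

end

theory Submission imports Defs begin

lemma sum_option: "(\<Sum>i\<in>UNIV. f i) = f None + (\<Sum>v\<in>UNIV. f (Some v))" for f :: "('v::finite) option \<Rightarrow> 'b::comm_monoid_add"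
proof -
  have "(UNIV :: 'v option set) = insert None (range Some)" by (rule UNIV_option_conv)
  moreover have "sum f (insert None (range Some)) = f None + sum f (range Some)" by (rule sum.insert) auto
  ultimately have "(\<Sum>i\<in>UNIV. f i) = f None + sum f (range Some)" by simp
  also have "sum f (range Some) = (\<Sum>v\<in>UNIV. f (Some v))" by (simp add: sum.reindex)
  finally show ?thesis .
qed

lemma sum_minus_None: "(\<Sum>j\<in>UNIV - {None}. f j) = (\<Sum>v\<in>UNIV. f (Some v))" for f :: "('v::finite) option \<Rightarrow> 'b::comm_monoid_add"
proof -
  have "(UNIV :: 'v option set) - {None} = range Some" by (auto, metis option.exhaust rangeI) 
  then show ?thesis by (simp add: sum.reindex)
qed

lemma pointwise:
  fixes xth :: "'v::finite option \<Rightarrow> real \<Rightarrow> 'v \<Rightarrow> real"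
  assumes a: "0 < alpha t" "alpha t < 1" "alpha' t < 0"
    and pos: "\<forall>x t v. 0 < xth x t v"
    and s1: "\<forall>x t. (\<Sum>v\<in>UNIV. xth x t v) = 1"
  shows "(\<Sum>i\<in>UNIV. cond_marg alpha t x0 i *
            ((\<Sum>j\<in>UNIV - {i}. model_rate alpha alpha' xth t i j)
             - (\<Sum>j\<in>UNIV - {i}. fwd_rate alpha alpha' t j i
                  * (cond_marg alpha t x0 j / cond_marg alpha t x0 i)
                  * ln (model_rate alpha alpha' xth t i j / fwd_rate alpha alpha' t j i))
             + (\<Sum>j\<in>UNIV - {i}. fwd_rate alpha alpha' t j i
                  * Kfun (cond_marg alpha t x0 j / cond_marg alpha t x0 i))))
   = (\<Sum>xt\<in>UNIV. cond_marg alpha t x0 xt *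
            (alpha' t / (1 - alpha t) * ln (xth xt t x0) * (if xt = None then 1 else 0)))"
proof -
  define a where "a = alpha t"
  define d where "d = alpha' t"
  have qS: "cond_marg alpha t x0 (Some v) = (if v = x0 then a else 0)" for v
    by (simp add: cond_marg_def a_def)
  have qN: "cond_marg alpha t x0 None = 1 - a" by (simp add: cond_marg_def a_def)
  have fS: "fwd_rate alpha alpha' t j (Some v) = 0" if "j \<noteq> Some v" for j v
    using that by (simp add: fwd_rate_def)
  have fN: "fwd_rate alpha alpha' t (Some v) None = - d / a" for v
    by (simp add: fwd_rate_def a_def d_def)
  have mS: "model_rate alpha alpha' xth t (Some v) j = 0" for v j
    by (simp add: model_rate_def)
  have mN: "model_rate alpha alpha' xth t None (Some v) = - d / (1 - a) * xth None t v" for v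
    by (simp add: model_rate_def gamma_sched_def a_def d_def)
  have termS: "cond_marg alpha t x0 (Some v) *
            ((\<Sum>j\<in>UNIV - {Some v}. model_rate alpha alpha' xth t (Some v) j)
             - (\<Sum>j\<in>UNIV - {Some v}. fwd_rate alpha alpha' t j (Some v)
                  * (cond_marg alpha t x0 j / cond_marg alpha t x0 (Some v))
                  * ln (model_rate alpha alpha' xth t (Some v) j / fwd_rate alpha alpha' t j (Some v)))
             + (\<Sum>j\<in>UNIV - {Some v}. fwd_rate alpha alpha' t j (Some v)
                  * Kfun (cond_marg alpha t x0 j / cond_marg alpha t x0 (Some v)))) = 0" for v
    by (simp add: mS fS)
  have s1': "(\<Sum>v\<in>UNIV. xth None t v) = 1" using s1 by simp
  have first: "(\<Sum>j\<in>UNIV - {None}. model_rate alpha alpha' xth t None j) = - d / (1 - a)"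
    proof -
    have "(\<Sum>v\<in>UNIV. - d / (1 - a) * xth None t v) = - d / (1 - a) * (\<Sum>v\<in>UNIV. xth None t v)"
      by (rule sum_distrib_left[symmetric])
    then show ?thesis by (simp only: sum_minus_None mN s1')
  qed
  have sumx0: "(\<Sum>v\<in>UNIV. if v = x0 then g v else 0) = g x0" for g :: "'v \<Rightarrow> real"
    by (simp add: sum.delta)
  have second: "(\<Sum>j\<in>UNIV - {None}. fwd_rate alpha alpha' t j None
                  * (cond_marg alpha t x0 j / cond_marg alpha t x0 None)
                  * ln (model_rate alpha alpha' xth t None j / fwd_rate alpha alpha' t j None))
     = (- d / a) * (a / (1 - a)) * ln ((- d / (1 - a) * xth None t x0) / (- d / a))"
    unfolding sum_minus_None fN qS qN mN
    by (subst sum.cong[OF refl, where h="\<lambda>v. if v = x0 then (- d / a) * (a / (1 - a)) * ln ((- d / (1 - a) * xth None t x0) / (- d / a)) else 0"]) (auto simp: sumx0)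
  have third: "(\<Sum>j\<in>UNIV - {None}. fwd_rate alpha alpha' t j None
                  * Kfun (cond_marg alpha t x0 j / cond_marg alpha t x0 None))
     = (- d / a) * Kfun (a / (1 - a))"
    unfolding sum_minus_None fN qS qN
    by (subst sum.cong[OF refl, where h="\<lambda>v. if v = x0 then (- d / a) * Kfun (a / (1 - a)) else 0"]) (auto simp: sumx0 Kfun_def)
  have ap: "0 < a" "a < 1" "d < 0" using a by (auto simp: a_def d_def)
  have xp: "0 < xth None t x0" using pos by simp
  have lnrw: "ln ((- d / (1 - a) * xth None t x0) / (- d / a)) = ln (a / (1 - a)) + ln (xth None t x0)"
  proof -
    have "(- d / (1 - a) * xth None t x0) / (- d / a) = (a / (1 - a)) * xth None t x0"
      using ap by (simp add: field_simps)
    moreover have "ln ((a / (1 - a)) * xth None t x0) = ln (a / (1 - a)) + ln (xth None t x0)"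
      using ap xp by (intro ln_mult_pos) auto
    ultimately show ?thesis by simp
  qed
  have main: "(1 - a) * (- d / (1 - a) - (- d / a) * (a / (1 - a)) * (ln (a / (1 - a)) + ln (xth None t x0))
       + (- d / a) * Kfun (a / (1 - a))) = (1 - a) * (d / (1 - a) * ln (xth None t x0))"
  proof -
    have b: "1 - a \<noteq> 0" "a \<noteq> 0" using ap by auto
    have e1: "(- d / a) * (a / (1 - a)) = - d / (1 - a)" using b by (simp add: field_simps)
    have e2: "(- d / a) * Kfun (a / (1 - a)) = (- d / (1 - a)) * (ln (a / (1 - a)) - 1)"
      unfolding Kfun_def using b by (simp add: field_simps)
    have e3: "(1 - a) * (- d / (1 - a)) = - d" "(1 - a) * (d / (1 - a)) = d" using b by auto
    show ?thesis unfolding e1 e2 using e3 by (simp add: algebra_simps)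
  qed
  have L: "(\<Sum>i\<in>UNIV. cond_marg alpha t x0 i *
            ((\<Sum>j\<in>UNIV - {i}. model_rate alpha alpha' xth t i j)
             - (\<Sum>j\<in>UNIV - {i}. fwd_rate alpha alpha' t j i
                  * (cond_marg alpha t x0 j / cond_marg alpha t x0 i)
                  * ln (model_rate alpha alpha' xth t i j / fwd_rate alpha alpha' t j i))
             + (\<Sum>j\<in>UNIV - {i}. fwd_rate alpha alpha' t j i
                  * Kfun (cond_marg alpha t x0 j / cond_marg alpha t x0 i))))
     = (1 - a) * (- d / (1 - a) - (- d / a) * (a / (1 - a)) * (ln (a / (1 - a)) + ln (xth None t x0))
       + (- d / a) * Kfun (a / (1 - a)))"
    apply (subst sum_option)
    apply (simp only: termS sum.neutral_const add_0_right)
    apply (simp only: first second third lnrw)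
    apply (simp only: qN)
    done
  have R: "(\<Sum>xt\<in>UNIV. cond_marg alpha t x0 xt *
            (alpha' t / (1 - alpha t) * ln (xth xt t x0) * (if xt = None then 1 else 0)))
     = (1 - a) * (d / (1 - a) * ln (xth None t x0))"
    by (subst sum_option) (simp add: qN a_def d_def)
  show ?thesis unfolding L R main ..
qed

theorem corollary4p10:
  fixes alpha alpha' :: "real \<Rightarrow> real" and T :: real
    and p :: "('v::finite) pmf"
    and xth :: "'v option \<Rightarrow> real \<Rightarrow> 'v \<Rightarrow> real"
  assumes "T > 0"
    and "\<forall>t\<in>{0..T}. (alpha has_real_derivative alpha' t) (at t within {0..T})"
    and "alpha 0 = 1" and "alpha T = 0"
    and "\<forall>t\<in>{0<..<T}. 0 < alpha t \<and> alpha t < 1 \<and> alpha' t < 0"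
    and "\<forall>x t v. 0 < xth x t v"
    and "\<forall>x t. (\<Sum>v\<in>UNIV. xth x t v) = 1"
  shows "L_cond alpha alpha' T p xth =
    (LINT t:{0..T}|lborel.
       (\<Sum>x0\<in>UNIV. pmf p x0 *
         (\<Sum>xt\<in>UNIV. cond_marg alpha t x0 xt *
            (alpha' t / (1 - alpha t) * ln (xth xt t x0) * (if xt = None then 1 else 0))))) / T"
proof -
  let ?F = "\<lambda>t. (\<Sum>x0\<in>UNIV. pmf p x0 *
          (\<Sum>i\<in>UNIV. cond_marg alpha t x0 i *
            ((\<Sum>j\<in>UNIV - {i}. model_rate alpha alpha' xth t i j)
             - (\<Sum>j\<in>UNIV - {i}. fwd_rate alpha alpha' t j i
                  * (cond_marg alpha t x0 j / cond_marg alpha t x0 i)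
                  * ln (model_rate alpha alpha' xth t i j / fwd_rate alpha alpha' t j i))
             + (\<Sum>j\<in>UNIV - {i}. fwd_rate alpha alpha' t j i
                  * Kfun (cond_marg alpha t x0 j / cond_marg alpha t x0 i)))))"
  let ?G = "\<lambda>t. (\<Sum>x0\<in>UNIV. pmf p x0 *
         (\<Sum>xt\<in>UNIV. cond_marg alpha t x0 xt *
            (alpha' t / (1 - alpha t) * ln (xth xt t x0) * (if xt = None then 1 else 0))))"
  have eq: "?F t = ?G t" if "t \<in> {0<..<T}" for t
  proof -
    have "0 < alpha t" "alpha t < 1" "alpha' t < 0" using assms(5) that by auto
    then show ?thesis
      by (intro sum.cong refl arg_cong2[where f="(*)"] pointwise) (use assms(6,7) in auto)
  qed
  have "(LINT t:{0..T}|lborel. ?F t) = (LINT t:{0..T}|lborel. ?G t)"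
    unfolding set_lebesgue_integral_def
  proof (rule integral_discrete_difference[where X="{0, T}"])
    fix x assume "x \<in> space lborel" "x \<notin> {0, T}"
    then show "indicator {0..T} x *\<^sub>R ?F x = indicator {0..T} x *\<^sub>R ?G x"
      using eq[of x] by (cases "x \<in> {0..T}") auto
  qed auto
  then show ?thesis unfolding L_cond_def by simp
qed

end
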